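(* Let $r\geq 3$ and let $D$ be an $m$-colored semicomplete $r$-partite digraph, and let $x,y$ be distinct vertices of $D$. Suppose there exists a directed path from $x$ to $y$ in $D$ that uses exactly $k$ colors for some $k\geq 4$, and suppose there is no directed path from $y$ to $x$ in $D$ using at most $4$ colors. Then $d(x,y)\leq 2$.
   Context: A semicomplete $r$-partite digraph ($r\ge 2$) is a digraph whose vertex set is partitioned into $r$ nonempty independent sets (partite sets) such that for any two vertices $u,v$ in different partite sets at least one of the arcs $(u,v)$, $(v,u)$ is present (both may be present); there are no arcs inside a partite set. An $m$-colored digraph is a digraph whose arcs are each assigned one of $m$ colors. A directed path (no repeated vertices) is $j$-colored if its arcs use exactly $j$ distinct colors; it uses at most $k$ colors if it is $j$-colored for some $1\le j\le k$. $d(x,y)$ denotes the minimum number of arcs of a directed path from $x$ to $y$. *)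

theory Defs
  imports Main
begin

definition semicomplete_multipartite ::
  "'a set \<Rightarrow> ('a \<times> 'a) set \<Rightarrow> 'a set set \<Rightarrow> nat \<Rightarrow> bool" where
  "semicomplete_multipartite V A P r \<longleftrightarrow>
     finite V \<and> A \<subseteq> V \<times> V \<and>
     finite P \<and> card P = r \<and> \<Union>P = V \<and> {} \<notin> P \<and>
     (\<forall>X\<in>P. \<forall>Y\<in>P. X \<noteq> Y \<longrightarrow> X \<inter> Y = {}) \<and>
     (\<forall>X\<in>P. \<forall>u\<in>X. \<forall>v\<in>X. (u, v) \<notin> A) \<and>
     (\<forall>X\<in>P. \<forall>Y\<in>P. X \<noteq> Y \<longrightarrow> (\<forall>u\<in>X. \<forall>v\<in>Y. (u, v) \<in> A \<or> (v, u) \<in> A))"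

definition dpath :: "('a \<times> 'a) set \<Rightarrow> 'a list \<Rightarrow> bool" where
  "dpath A xs \<longleftrightarrow> xs \<noteq> [] \<and> distinct xs \<and>
     (\<forall>i. Suc i < length xs \<longrightarrow> (xs ! i, xs ! Suc i) \<in> A)"

definition dpath_from_to :: "('a \<times> 'a) set \<Rightarrow> 'a \<Rightarrow> 'a \<Rightarrow> 'a list \<Rightarrow> bool" where
  "dpath_from_to A x y xs \<longleftrightarrow> dpath A xs \<and> hd xs = x \<and> last xs = y"

definition path_colors :: "('a \<Rightarrow> 'a \<Rightarrow> 'c) \<Rightarrow> 'a list \<Rightarrow> 'c set" where
  "path_colors col xs = {col (xs ! i) (xs ! Suc i) | i. Suc i < length xs}"

definition ddist :: "('a \<times> 'a) set \<Rightarrow> 'a \<Rightarrow> 'a \<Rightarrow> nat" where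
  "ddist A x y = (LEAST n. \<exists>xs. dpath_from_to A x y xs \<and> length xs = Suc n)"

end

theory Submission
  imports Defs
begin

lemma dpath_single: "dpath A [a]"
  by (simp add: dpath_def)

lemma dpath_cons2: "dpath A (a # b # rest) \<longleftrightarrow> (a,b) \<in> A \<and> a \<notin> set (b#rest) \<and> dpath A (b#rest)"
proof
  assume h: "dpath A (a # b # rest)"
  have "(a,b) \<in> A" using h unfolding dpath_def by (metis length_Cons nth_Cons_0 nth_Cons_Suc zero_less_Suc Suc_less_eq)
  moreover have "dpath A (b#rest)" unfolding dpath_def
  proof (intro conjI allI impI)
    fix i assume "Suc i < length (b#rest)"
    then show "((b # rest) ! i, (b # rest) ! Suc i) \<in> A"
      using h unfolding dpath_def by (metis Suc_less_eq length_Cons nth_Cons_Suc)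
  qed (use h in \<open>auto simp: dpath_def\<close>)
  ultimately show "(a,b) \<in> A \<and> a \<notin> set (b#rest) \<and> dpath A (b#rest)" using h unfolding dpath_def by auto
next
  assume h: "(a,b) \<in> A \<and> a \<notin> set (b#rest) \<and> dpath A (b#rest)"
  show "dpath A (a # b # rest)" unfolding dpath_def
  proof (intro conjI allI impI)
    show "distinct (a # b # rest)" using h unfolding dpath_def by auto
    fix i assume "Suc i < length (a # b # rest)"
    then show "((a # b # rest) ! i, (a # b # rest) ! Suc i) \<in> A"
      using h unfolding dpath_def by (cases i) auto
  qed simp
qed

lemma colors_bound:
  assumes "2 \<le> length ys"
  shows "1 \<le> card (path_colors col ys) \<and> card (path_colors col ys) \<le> length ys - 1"
proof -
  have eq: "path_colors col ys = (\<lambda>i. col (ys!i) (ys!Suc i)) ` {..<length ys - 1}"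
    unfolding path_colors_def by auto
  have "card (path_colors col ys) \<le> card {..<length ys - 1}" unfolding eq by (rule card_image_le) simp
  moreover have "0 \<in> {..<length ys - 1}" using assms by simp
  then have "path_colors col ys \<noteq> {}" unfolding eq by blast
  moreover have "finite (path_colors col ys)" unfolding eq by simp
  ultimately show ?thesis by (simp add: Suc_leI card_gt_0_iff)
qed

lemma shortcut:
  assumes p: "dpath_from_to A x y xs" and ij: "Suc i < j" and jl: "j < length xs"
    and arc: "(xs!i, xs!j) \<in> A"
  shows "\<exists>ys. dpath_from_to A x y ys \<and> length ys < length xs"
proof -
  define ys where "ys = take (Suc i) xs @ drop j xs"
  have dx: "distinct xs" "xs \<noteq> []" "hd xs = x" "last xs = y" using p unfolding dpath_from_to_def dpath_def by auto
  have ar: "\<And>k. Suc k < length xs \<Longrightarrow> (xs!k, xs!Suc k) \<in> A" using p unfolding dpath_from_to_def dpath_def by auto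
  have len: "length ys = Suc i + (length xs - j)" unfolding ys_def using ij jl by auto
  have "distinct ys"
  proof -
    have "xs = take j xs @ drop j xs" by simp
    then have "distinct (take j xs @ drop j xs)" using dx by simp
    then have dj: "set (take j xs) \<inter> set (drop j xs) = {}" by (simp only: distinct_append)
    moreover have "set (take (Suc i) xs) \<subseteq> set (take j xs)"
      using ij by (metis Suc_lessD less_imp_le_nat set_take_subset_set_take)
    ultimately show ?thesis unfolding ys_def using dx
      using dj by (simp add: distinct_take) blast
  qed
  moreover have "\<forall>k. Suc k < length ys \<longrightarrow> (ys!k, ys!Suc k) \<in> A"
  proof (intro allI impI)
    fix k assume k: "Suc k < length ys"
    consider "Suc k < Suc i" | "k = i" | "k > i" by linarith
    then show "(ys!k, ys!Suc k) \<in> A"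
    proof cases
      case 1
      then show ?thesis unfolding ys_def using ij jl ar[of k] by (auto simp: nth_append)
    next
      case 2
      then show ?thesis unfolding ys_def using ij jl arc by (auto simp: nth_append)
    next
      case 3
      have "ys!k = xs!(k - Suc i + j)" unfolding ys_def using 3 ij jl by (auto simp: nth_append add.commute)
      moreover have "ys!Suc k = xs!(Suc (k - Suc i + j))" unfolding ys_def using 3 ij jl k
        by (auto simp: nth_append intro!: arg_cong[where f="(!) xs"])
      moreover have "Suc (k - Suc i + j) < length xs" using k len 3 by linarith
      ultimately show ?thesis using ar by simp
    qed
  qed
  moreover have "ys \<noteq> []" unfolding ys_def using dx by simp
  moreover have "hd ys = x" unfolding ys_def using dx by (cases xs) auto
  moreover have "last ys = y" unfolding ys_def using dx jl by (simp add: last_drop)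
  ultimately show ?thesis using len ij jl unfolding dpath_from_to_def dpath_def by (intro exI[of _ ys]) auto
qed

theorem mainTheorem1:
  fixes V :: "'a set" and A :: "('a \<times> 'a) set" and P :: "'a set set"
    and r :: nat and col :: "'a \<Rightarrow> 'a \<Rightarrow> 'c" and x y :: 'a and k :: nat
  assumes "r \<ge> 3"
    and "semicomplete_multipartite V A P r"
    and "x \<in> V" and "y \<in> V" and "x \<noteq> y"
    and "k \<ge> 4"
    and "\<exists>xs. dpath_from_to A x y xs \<and> card (path_colors col xs) = k"
    and "\<not> (\<exists>ys. dpath_from_to A y x ys \<and> 1 \<le> card (path_colors col ys)
                  \<and> card (path_colors col ys) \<le> 4)"
  shows "ddist A x y \<le> 2"
proof (rule ccontr)
  assume nle: "\<not> ddist A x y \<le> 2"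
  note sm = assms(2)[unfolded semicomplete_multipartite_def]
  have AV0: "A \<subseteq> V \<times> V" and UP: "\<Union>P = V"
    and dis: "\<forall>X\<in>P. \<forall>Y\<in>P. X \<noteq> Y \<longrightarrow> X \<inter> Y = {}"
    and ind: "\<forall>X\<in>P. \<forall>u\<in>X. \<forall>v\<in>X. (u, v) \<notin> A"
    and com: "\<forall>X\<in>P. \<forall>Y\<in>P. X \<noteq> Y \<longrightarrow> (\<forall>u\<in>X. \<forall>v\<in>Y. (u, v) \<in> A \<or> (v, u) \<in> A)"
    using sm by auto
  define sp where "sp u v \<longleftrightarrow> (\<exists>X\<in>P. u \<in> X \<and> v \<in> X)" for u v
  have sp_arc: "\<And>u v. u \<in> V \<Longrightarrow> v \<in> V \<Longrightarrow> \<not> sp u v \<Longrightarrow> (u,v) \<in> A \<or> (v,u) \<in> A"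
  proof -
    fix u v assume "u \<in> V" "v \<in> V" "\<not> sp u v"
    then obtain X Y where "X \<in> P" "Y \<in> P" "u \<in> X" "v \<in> Y" "X \<noteq> Y" using UP unfolding sp_def by blast
    then show "(u,v) \<in> A \<or> (v,u) \<in> A" using com by blast
  qed
  have sp_no: "\<And>u v. sp u v \<Longrightarrow> (u,v) \<notin> A" using ind unfolding sp_def by blast
  have sp_sym: "\<And>u v. sp u v \<Longrightarrow> sp v u" unfolding sp_def by blast
  have sp_trans: "\<And>u v w. sp u v \<Longrightarrow> sp v w \<Longrightarrow> sp u w" unfolding sp_def using dis by blast
  have AV: "\<And>u v. (u,v) \<in> A \<Longrightarrow> u \<in> V \<and> v \<in> V" using AV0 by blast
  have nopath: "\<And>ys. dpath_from_to A y x ys \<Longrightarrow> length ys \<le> 5 \<Longrightarrow> False"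
  proof -
    fix ys assume h: "dpath_from_to A y x ys" "length ys \<le> 5"
    have "length ys \<ge> 2"
    proof (rule ccontr)
      assume "\<not> 2 \<le> length ys"
      moreover have "ys \<noteq> []" using h unfolding dpath_from_to_def dpath_def by auto
      ultimately obtain a where "ys = [a]" by (cases ys) (auto simp: Suc_le_eq)
      then show False using h assms(5) unfolding dpath_from_to_def by auto
    qed
    then show False using colors_bound[of ys col] h assms(8) by auto
  qed
  obtain xs0 where xs0: "dpath_from_to A x y xs0" using assms(7) by blast
  have ex: "\<exists>n xs. dpath_from_to A x y xs \<and> length xs = Suc n"
  proof -
    have "xs0 \<noteq> []" using xs0 unfolding dpath_from_to_def dpath_def by auto
    then have "length xs0 = Suc (length xs0 - 1)" by (cases xs0) auto
    then show ?thesis using xs0 by blast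
  qed
  define n where "n = ddist A x y"
  obtain xs where xs: "dpath_from_to A x y xs" "length xs = Suc n"
    using LeastI_ex[OF ex] unfolding n_def ddist_def by blast
  have minimal: "\<And>ys. dpath_from_to A x y ys \<Longrightarrow> length ys < length xs \<Longrightarrow> False"
  proof -
    fix ys assume h: "dpath_from_to A x y ys" "length ys < length xs"
    have "ys \<noteq> []" using h unfolding dpath_from_to_def dpath_def by auto
    then have ly: "length ys = Suc (length ys - 1)" by (cases ys) auto
    then have "n \<le> length ys - 1" unfolding n_def ddist_def using h(1)
      by (intro Least_le) blast
    then show False using h xs ly by linarith
  qed
  have noshort: "\<And>i j. Suc i < j \<Longrightarrow> j < length xs \<Longrightarrow> (xs!i, xs!j) \<notin> A"
    using shortcut[OF xs(1)] minimal by blast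
  have n3: "n \<ge> 3" using nle n_def by simp
  have dist: "distinct xs" and x0: "xs!0 = x" and yn: "xs!n = y"
    using xs unfolding dpath_from_to_def dpath_def by (auto simp: hd_conv_nth last_conv_nth)
  have arcs: "\<And>i. Suc i < length xs \<Longrightarrow> (xs!i, xs!Suc i) \<in> A"
    using xs unfolding dpath_from_to_def dpath_def by auto
  have inV: "\<And>i. i < length xs \<Longrightarrow> xs!i \<in> V"
  proof -
    fix i assume i: "i < length xs"
    show "xs!i \<in> V"
    proof (cases i)
      case 0 then show ?thesis using x0 assms(3) by simp
    next
      case (Suc j) then show ?thesis using arcs[of j] AV i by auto
    qed
  qed
  have neq: "\<And>i j. i < length xs \<Longrightarrow> j < length xs \<Longrightarrow> i \<noteq> j \<Longrightarrow> xs!i \<noteq> xs!j"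
    using dist by (simp add: nth_eq_iff_index_eq)
  have spxy: "sp x y"
  proof (rule ccontr)
    assume "\<not> sp x y"
    then have "(x,y) \<in> A \<or> (y,x) \<in> A" using sp_arc assms(3,4) by blast
    moreover have "(x,y) \<notin> A" using noshort[of 0 n] x0 yn xs n3 by simp
    moreover have "(y,x) \<in> A \<Longrightarrow> False"
      using nopath[of "[y,x]"] assms(5) by (simp add: dpath_from_to_def dpath_cons2 dpath_single)
    ultimately show False by blast
  qed
  have L: "Suc n = length xs" using xs by simp
  have a01: "(x, xs!1) \<in> A" using arcs[of 0] x0 L n3 by simp
  have yv1: "(y, xs!1) \<in> A"
  proof -
    have "\<not> sp (xs!1) y"
    proof
      assume "sp (xs!1) y"
      then have "sp x (xs!1)" using spxy sp_sym sp_trans by blast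
      then show False using sp_no a01 by blast
    qed
    then have "(xs!1, y) \<in> A \<or> (y, xs!1) \<in> A" using sp_arc inV[of 1] L n3 assms(4) by auto
    moreover have "(xs!1, y) \<notin> A" using noshort[of 1 n] L n3 yn by simp
    ultimately show ?thesis by blast
  qed
  have an: "(xs!(n-1), y) \<in> A" using arcs[of "n-1"] yn L n3 by (simp add: Suc_diff_1)
  have vx: "(xs!(n-1), x) \<in> A"
  proof -
    have "\<not> sp (xs!(n-1)) x"
    proof
      assume "sp (xs!(n-1)) x"
      then have "sp (xs!(n-1)) y" using spxy sp_trans by blast
      then show False using sp_no an by blast
    qed
    then have "(xs!(n-1), x) \<in> A \<or> (x, xs!(n-1)) \<in> A" using sp_arc inV[of "n-1"] L n3 assms(3) by auto
    moreover have "(x, xs!(n-1)) \<notin> A" using noshort[of 0 "n-1"] L n3 x0 by simp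
    ultimately show ?thesis by blast
  qed
  have mid: "\<And>i. 2 \<le> i \<Longrightarrow> i + 2 \<le> n \<Longrightarrow> sp (xs!i) x"
  proof (rule ccontr)
    fix i assume i: "2 \<le> i" "i + 2 \<le> n" and ns: "\<not> sp (xs!i) x"
    have ns2: "\<not> sp (xs!i) y" using ns spxy sp_sym sp_trans by blast
    have "(xs!i, x) \<in> A \<or> (x, xs!i) \<in> A" using sp_arc inV[of i] L i ns assms(3) by auto
    moreover have "(x, xs!i) \<notin> A" using noshort[of 0 i] L i x0 by simp
    ultimately have 1: "(xs!i, x) \<in> A" by blast
    have "(xs!i, y) \<in> A \<or> (y, xs!i) \<in> A" using sp_arc inV[of i] L i ns2 assms(4) by auto
    moreover have "(xs!i, y) \<notin> A" using noshort[of i n] L i yn by simp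
    ultimately have 2: "(y, xs!i) \<in> A" by blast
    have "xs!i \<noteq> xs!0" by (rule neq) (use L i in auto)
    moreover have "xs!i \<noteq> xs!n" by (rule neq) (use L i in auto)
    ultimately have "xs!i \<noteq> x" "xs!i \<noteq> y" using x0 yn by auto
    then show False using nopath[of "[y, xs!i, x]"] 1 2 assms(5)
      by (simp add: dpath_from_to_def dpath_cons2 dpath_single)
  qed
  consider "n = 3" | "n = 4" | "n \<ge> 5" using n3 by linarith
  then show False
  proof cases
    case 1
    have d: "y \<noteq> xs!1" "y \<noteq> xs!2" "x \<noteq> xs!1" "x \<noteq> xs!2" "xs!1 \<noteq> xs!2"
    proof -
      have "xs!1 \<noteq> xs!0" by (rule neq) (use L 1 in auto)
      moreover have "xs!2 \<noteq> xs!0" by (rule neq) (use L 1 in auto)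
      moreover have "xs!1 \<noteq> xs!3" by (rule neq) (use L 1 in auto)
      moreover have "xs!2 \<noteq> xs!3" by (rule neq) (use L 1 in auto)
      moreover have "xs!1 \<noteq> xs!2" by (rule neq) (use L 1 in auto)
      ultimately show "y \<noteq> xs!1" "y \<noteq> xs!2" "x \<noteq> xs!1" "x \<noteq> xs!2" "xs!1 \<noteq> xs!2" using x0 yn 1 by auto
    qed
    have "(xs!1, xs!2) \<in> A" using arcs[of 1] L 1 by (simp add: numeral_2_eq_2)
    then show False using nopath[of "[y, xs!1, xs!2, x]"] yv1 vx 1 d assms(5)
      by (simp add: dpath_from_to_def dpath_cons2 dpath_single)
  next
    case 2
    have d: "y \<noteq> xs!1" "y \<noteq> xs!2" "y \<noteq> xs!3" "x \<noteq> xs!1" "x \<noteq> xs!2" "x \<noteq> xs!3" "xs!1 \<noteq> xs!2" "xs!1 \<noteq> xs!3" "xs!2 \<noteq> xs!3"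
    proof -
      have "xs!1 \<noteq> xs!0" by (rule neq) (use L 2 in auto)
      moreover have "xs!2 \<noteq> xs!0" by (rule neq) (use L 2 in auto)
      moreover have "xs!3 \<noteq> xs!0" by (rule neq) (use L 2 in auto)
      moreover have "xs!1 \<noteq> xs!4" by (rule neq) (use L 2 in auto)
      moreover have "xs!2 \<noteq> xs!4" by (rule neq) (use L 2 in auto)
      moreover have "xs!3 \<noteq> xs!4" by (rule neq) (use L 2 in auto)
      moreover have "xs!1 \<noteq> xs!2" by (rule neq) (use L 2 in auto)
      moreover have "xs!1 \<noteq> xs!3" by (rule neq) (use L 2 in auto)
      moreover have "xs!2 \<noteq> xs!3" by (rule neq) (use L 2 in auto)
      ultimately show "y \<noteq> xs!1" "y \<noteq> xs!2" "y \<noteq> xs!3" "x \<noteq> xs!1" "x \<noteq> xs!2" "x \<noteq> xs!3" "xs!1 \<noteq> xs!2" "xs!1 \<noteq> xs!3" "xs!2 \<noteq> xs!3" using x0 yn 2 by auto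
    qed
    have "(xs!1, xs!2) \<in> A" "(xs!2, xs!3) \<in> A" using arcs[of 1] arcs[of 2] L 2 by (auto simp: numeral_2_eq_2 numeral_3_eq_3)
    then show False using nopath[of "[y, xs!1, xs!2, xs!3, x]"] yv1 vx 2 d assms(5)
      by (simp add: dpath_from_to_def dpath_cons2 dpath_single)
  next
    case 3
    have "sp (xs!2) x" "sp (xs!3) x" using mid[of 2] mid[of 3] 3 by auto
    then have "sp (xs!2) (xs!3)" using sp_sym sp_trans by blast
    moreover have "(xs!2, xs!3) \<in> A" using arcs[of 2] L 3 by (auto simp: numeral_2_eq_2 numeral_3_eq_3)
    ultimately show False using sp_no by blast
  qed
qed

end
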